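(* Let $n\ge1$, let $s_1,\dots,s_n\in\mathbb R$ be distinct, and let $a,\rho_0,S,K_j,M_j$ ($1\le j\le n$) be positive constants. For $\zeta\in\mathbb C\setminus i\mathbb R$ let $\Gamma(\zeta)$ be the $n\times n$ matrix $$\Gamma(\zeta)_{ij}=-\zeta\Big(\pm\frac{e^{\mp\zeta|s_i-s_j|/a}}{2a\rho_0\zeta}+\frac{S\delta_{ij}}{K_j+\zeta^2M_j}\Big),\qquad \pm\mathrm{Re}\,\zeta>0.$$ Then for every $\lambda\in i\mathbb R\setminus\{0\}$ the matrices $$\Gamma_\pm(\lambda)^{-1}:=\lim_{\varepsilon\downarrow0}\Gamma(\lambda\pm\varepsilon)^{-1}$$ are well defined. *)

theory Defs
  imports "HOL-Analysis.Analysis"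
begin

text \<open>The n x n matrix Gamma(zeta), indices ranging over a finite type 'n
  (so n = CARD('n) >= 1). The sign choice is +1 if Re zeta > 0 and -1 if
  Re zeta < 0; on the imaginary axis the matrix is not defined by the paper
  and we set it to 0 (it is never used there).\<close>

definition Gamma_mat ::
  "real \<Rightarrow> real \<Rightarrow> real \<Rightarrow> ('n::finite \<Rightarrow> real) \<Rightarrow> ('n \<Rightarrow> real) \<Rightarrow> ('n \<Rightarrow> real)
   \<Rightarrow> complex \<Rightarrow> complex^'n^'n" where
  "Gamma_mat a rho0 S K M s \<zeta> =
     (if Re \<zeta> = 0 then 0 else
      (let \<sigma> = (if Re \<zeta> > 0 then (1::complex) else -1) in
       (\<chi> i j. - \<zeta> * ( \<sigma> * exp (- \<sigma> * \<zeta> * of_real \<bar>s i - s j\<bar> / of_real a)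
                            / (2 * of_real a * of_real rho0 * \<zeta>)
                        + (if i = j then of_real S else 0)
                            / (of_real (K j) + \<zeta>^2 * of_real (M j))))))"

end

theory Submission
  imports Defs
begin


lemma cis_pair:
  fixes u v \<phi> :: real
  shows "cis (\<phi> * \<bar>u - v\<bar>) + cis (- (\<phi> * \<bar>u - v\<bar>)) = cis (\<phi> * (v - u)) + cis (\<phi> * (u - v))"
proof (cases "u \<le> v")
  case True
  then have "\<bar>u - v\<bar> = v - u" by simp
  then show ?thesis by (simp add: algebra_simps)
next
  case False
  then have "\<bar>u - v\<bar> = u - v" by simp
  then show ?thesis by (simp add: algebra_simps)
qed

lemma core:
  fixes s c :: "'n::finite \<Rightarrow> real" and r \<phi> :: real and y :: "'n \<Rightarrow> complex"
  assumes r: "r \<noteq> 0"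
    and eq: "\<And>i. (\<Sum>j\<in>UNIV. cis (\<phi> * \<bar>s i - s j\<bar>) * (of_real (c j) * y j)) = \<i> * of_real r * y i"
  shows "y i = 0"
proof -
  define x where "x j = of_real (c j) * y j" for j
  have eqx: "(\<Sum>j\<in>UNIV. cis (\<phi> * \<bar>s i - s j\<bar>) * x j) = \<i> * of_real r * y i" for i
    using eq[of i] by (simp add: x_def)
  define Q where "Q = (\<Sum>i\<in>UNIV. cnj (x i) * (\<Sum>j\<in>UNIV. cis (\<phi> * \<bar>s i - s j\<bar>) * x j))"
  define A where "A = (\<Sum>j\<in>UNIV. x j * cis (\<phi> * s j))"
  define B where "B = (\<Sum>j\<in>UNIV. x j * cis (- (\<phi> * s j)))"
  have Q1: "Q = \<i> * of_real (r * (\<Sum>i\<in>UNIV. c i * (cmod (y i))^2))"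
  proof -
    have "Q = (\<Sum>i\<in>UNIV. \<i> * of_real (r * (c i * (cmod (y i))^2)))"
      unfolding Q_def eqx
    proof (rule sum.cong[OF refl])
      fix i
      have "cnj (x i) * (\<i> * of_real r * y i) = \<i> * of_real r * of_real (c i) * (y i * cnj (y i))"
        by (simp add: x_def)
      also have "\<dots> = \<i> * of_real (r * (c i * (cmod (y i))^2))"
        by (simp add: complex_norm_square[symmetric])
      finally show "cnj (x i) * (\<i> * of_real r * y i) = \<i> * of_real (r * (c i * (cmod (y i))^2))" .
    qed
    also have "\<dots> = \<i> * of_real (r * (\<Sum>i\<in>UNIV. c i * (cmod (y i))^2))"
      by (simp add: sum_distrib_left)
    finally show ?thesis .
  qed
  have Q2: "Q + cnj Q = cnj A * A + cnj B * B"
  proof -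
    have "cnj Q = (\<Sum>i\<in>UNIV. \<Sum>j\<in>UNIV. x i * cis (- (\<phi> * \<bar>s i - s j\<bar>)) * cnj (x j))"
      unfolding Q_def by (simp add: sum_distrib_left mult_ac cis_cnj)
    also have "\<dots> = (\<Sum>j\<in>UNIV. \<Sum>i\<in>UNIV. x i * cis (- (\<phi> * \<bar>s i - s j\<bar>)) * cnj (x j))"
      by (rule sum.swap)
    also have "\<dots> = (\<Sum>i\<in>UNIV. \<Sum>j\<in>UNIV. cnj (x i) * x j * cis (- (\<phi> * \<bar>s i - s j\<bar>)))"
      by (simp add: abs_minus_commute mult_ac)
    finally have cQ: "cnj Q = \<dots>" .
    have "Q + cnj Q = (\<Sum>i\<in>UNIV. \<Sum>j\<in>UNIV. cnj (x i) * x j *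
            (cis (\<phi> * \<bar>s i - s j\<bar>) + cis (- (\<phi> * \<bar>s i - s j\<bar>))))"
      unfolding cQ unfolding Q_def by (simp add: sum_distrib_left distrib_left sum.distrib mult_ac)
    also have "\<dots> = (\<Sum>i\<in>UNIV. \<Sum>j\<in>UNIV. cnj (x i) * x j *
            (cis (\<phi> * (s j - s i)) + cis (\<phi> * (s i - s j))))"
      by (simp only: cis_pair)
    also have "\<dots> = (\<Sum>i\<in>UNIV. \<Sum>j\<in>UNIV. (cnj (x i) * cis (- (\<phi> * s i))) * (x j * cis (\<phi> * s j))
                + (cnj (x i) * cis (\<phi> * s i)) * (x j * cis (- (\<phi> * s j))))"
      by (intro sum.cong refl) (simp add: cis_mult algebra_simps)
    also have "\<dots> = (\<Sum>i\<in>UNIV. cnj (x i) * cis (- (\<phi> * s i))) * A + (\<Sum>i\<in>UNIV. cnj (x i) * cis (\<phi> * s i)) * B"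
      unfolding A_def B_def by (simp only: sum.distrib sum_product)
    also have "\<dots> = cnj A * A + cnj B * B"
      unfolding A_def B_def by (simp add: cnj_sum cis_cnj)
    finally show ?thesis .
  qed
  have "Q + cnj Q = 0" unfolding Q1 by simp
  then have "of_real ((cmod A)^2 + (cmod B)^2) = (0::complex)"
    unfolding Q2 by (simp add: complex_norm_square[symmetric] mult.commute)
  then have "(cmod A)^2 + (cmod B)^2 = 0" by (simp only: of_real_eq_0_iff)
  then have A0: "A = 0"
    by (metis add_nonneg_eq_0_iff norm_eq_zero zero_le_power2 power_eq_0_iff)
  have x0: "x k = 0" for k
  proof (rule ccontr)
    assume "x k \<noteq> 0"
    define Z where "Z = {i. x i \<noteq> 0}"
    have Zne: "s ` Z \<noteq> {}" using \<open>x k \<noteq> 0\<close> Z_def by blast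
    have "Min (s ` Z) \<in> s ` Z" by (rule Min_in) (use Zne in simp_all)
    then obtain i0 where i0: "i0 \<in> Z" "s i0 = Min (s ` Z)" by auto
    have le: "s i0 \<le> s j" if "x j \<noteq> 0" for j
      using that i0(2) Z_def by simp
    have "(\<Sum>j\<in>UNIV. cis (\<phi> * \<bar>s i0 - s j\<bar>) * x j) = (\<Sum>j\<in>UNIV. cis (- (\<phi> * s i0)) * (x j * cis (\<phi> * s j)))"
    proof (rule sum.cong[OF refl])
      fix j
      show "cis (\<phi> * \<bar>s i0 - s j\<bar>) * x j = cis (- (\<phi> * s i0)) * (x j * cis (\<phi> * s j))"
      proof (cases "x j = 0")
        case False
        then have "\<bar>s i0 - s j\<bar> = s j - s i0" using le by simp
        then show ?thesis by (simp add: cis_mult algebra_simps)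
      qed simp
    qed
    also have "\<dots> = cis (- (\<phi> * s i0)) * A" unfolding A_def by (simp add: sum_distrib_left)
    finally have "\<i> * of_real r * y i0 = 0" using eqx A0 by simp
    then have "y i0 = 0" using r by simp
    then have "x i0 = 0" by (simp add: x_def)
    then show False using i0 Z_def by simp
  qed
  show ?thesis using eqx[of i] r by (simp add: x0)
qed



lemma tendsto_det:
  fixes A :: "'b \<Rightarrow> 'a::{comm_ring_1,real_normed_algebra}^'n^'n"
  assumes "(A \<longlongrightarrow> A0) F"
  shows "((\<lambda>x. det (A x)) \<longlongrightarrow> det A0) F"
  unfolding det_def
  by (intro tendsto_intros assms)

lemma matrix_inv_unique:
  fixes A B :: "'a::field^'n^'n"
  assumes "A ** B = mat 1"
  shows "matrix_inv A = B"
proof -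
  have BA: "B ** A = mat 1" using assms matrix_left_right_inverse by blast
  have "\<exists>A'. A ** A' = mat 1 \<and> A' ** A = mat 1" using assms BA by blast
  then have "A ** matrix_inv A = mat 1 \<and> matrix_inv A ** A = mat 1"
    unfolding matrix_inv_def by (rule someI_ex)
  then have "matrix_inv A ** A = mat 1" by simp
  have "matrix_inv A = matrix_inv A ** (A ** B)" by (simp add: assms matrix_mul_rid)
  also have "\<dots> = (matrix_inv A ** A) ** B" by (simp add: matrix_mul_assoc)
  also have "\<dots> = B" using \<open>matrix_inv A ** A = mat 1\<close> by (simp add: matrix_mul_lid)
  finally show ?thesis .
qed

lemma matrix_inv_works:
  fixes A :: "'a::field^'n^'n"
  assumes "invertible A"
  shows "A ** matrix_inv A = mat 1"
proof -
  have "\<exists>A'. A ** A' = mat 1 \<and> A' ** A = mat 1" using assms unfolding invertible_def by blast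
  then have "A ** matrix_inv A = mat 1 \<and> matrix_inv A ** A = mat 1"
    unfolding matrix_inv_def by (rule someI_ex)
  then show ?thesis by simp
qed

lemma inv_cramer:
  fixes A :: "'a::field^'n^'n"
  assumes "det A \<noteq> 0"
  shows "matrix_inv A $ k $ j =
    det (\<chi> i l. if l = k then (if i = j then 1 else 0) else A$i$l) / det A"
proof -
  have inv: "invertible A" using assms invertible_det_nz by blast
  define x where "x = matrix_inv A *v (\<chi> i. if i = j then 1 else 0)"
  have "A *v x = (\<chi> i. if i = j then 1 else 0)"
    unfolding x_def matrix_vector_mul_assoc matrix_inv_works[OF inv] by simp
  then have xe: "x = (\<chi> k. det(\<chi> i l. if l=k then (\<chi> i. if i = j then 1 else 0)$i else A$i$l) / det A)"
    using cramer[OF assms] by blast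
  have "x $ k = det(\<chi> i l. if l=k then (if i = j then 1 else 0) else A$i$l) / det A"
    by (subst xe) (simp only: vec_lambda_beta)
  moreover have "x $ k = matrix_inv A $ k $ j"
    unfolding x_def matrix_vector_mult_def
    by (simp add: if_distrib cong: if_cong)
  ultimately show ?thesis by simp
qed

lemma diag_mult_inv:
  fixes d :: "'n::finite \<Rightarrow> 'a::field"
  assumes "\<And>j. d j \<noteq> 0"
  shows "(\<chi> i j. if i = j then d j else 0) ** (\<chi> i j. if i = j then inverse (d j) else 0) = mat 1"
  using assms by (simp add: matrix_matrix_mult_def mat_def vec_eq_iff if_distrib[of "\<lambda>x. x * _"] cong: if_cong)

lemma tendsto_matrix_inv:
  fixes P :: "'b \<Rightarrow> complex^'n::finite^'n"
  assumes P: "(P \<longlongrightarrow> P0) F" and det0: "det P0 \<noteq> 0"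
  shows "((\<lambda>x. matrix_inv (P x)) \<longlongrightarrow> matrix_inv P0) F"
proof -
  have dP: "((\<lambda>x. det (P x)) \<longlongrightarrow> det P0) F" by (rule tendsto_det[OF P])
  have ev: "eventually (\<lambda>x. det (P x) \<noteq> 0) F"
    using tendsto_imp_eventually_ne[OF dP det0] .
  show ?thesis
  proof (rule vec_tendstoI, rule vec_tendstoI)
    fix k j
    have M: "((\<lambda>x. (\<chi> i l. if l = k then (if i = j then 1 else 0) else P x $i$l)) \<longlongrightarrow>
       (\<chi> i l. if l = k then (if i = j then 1 else 0) else P0 $i$l)) F"
    proof (rule tendsto_vec_lambda, rule tendsto_vec_lambda)
      fix i l show "((\<lambda>x. if l = k then (if i = j then 1 else 0) else P x $i$l) \<longlongrightarrow>
          (if l = k then (if i = j then 1 else 0) else P0 $i$l)) F"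
        by (cases "l = k") (auto intro!: tendsto_vec_nth P)
    qed
    have "((\<lambda>x. det (\<chi> i l. if l = k then (if i = j then 1 else 0) else P x $i$l) / det (P x)) \<longlongrightarrow>
       det (\<chi> i l. if l = k then (if i = j then 1 else 0) else P0 $i$l) / det P0) F"
      by (intro tendsto_divide tendsto_det M dP det0)
    then have "((\<lambda>x. det (\<chi> i l. if l = k then (if i = j then 1 else 0) else P x $i$l) / det (P x)) \<longlongrightarrow>
       matrix_inv P0 $ k $ j) F" by (simp only: inv_cramer[OF det0])
    then show "((\<lambda>x. matrix_inv (P x) $ k $ j) \<longlongrightarrow> matrix_inv P0 $ k $ j) F"
      by (rule tendsto_cong[THEN iffD1, rotated]) (rule eventually_mono[OF ev], simp add: inv_cramer)
  qed
qed

lemma tendsto_matrix_mult: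
  fixes A B :: "'b \<Rightarrow> complex^'n::finite^'n"
  assumes "(A \<longlongrightarrow> A0) F" "(B \<longlongrightarrow> B0) F"
  shows "((\<lambda>x. A x ** B x) \<longlongrightarrow> A0 ** B0) F"
  unfolding matrix_matrix_mult_def
  by (intro tendsto_vec_lambda tendsto_sum tendsto_mult tendsto_vec_nth assms)


lemma inv_limit:
  fixes P G :: "real \<Rightarrow> complex^'n::finite^'n" and d :: "real \<Rightarrow> 'n \<Rightarrow> complex"
  assumes P: "(P \<longlongrightarrow> P0) F" and det0: "det P0 \<noteq> 0"
    and ev: "eventually (\<lambda>x. G x = P x ** (\<chi> i j. if i = j then d x j else 0) \<and> (\<forall>j. d x j \<noteq> 0)) F"
    and dl: "\<And>j. ((\<lambda>x. inverse (d x j)) \<longlongrightarrow> e j) F"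
  shows "eventually (\<lambda>x. invertible (G x)) F \<and> (\<exists>L. ((\<lambda>x. matrix_inv (G x)) \<longlongrightarrow> L) F)"
proof -
  have dP: "((\<lambda>x. det (P x)) \<longlongrightarrow> det P0) F" by (rule tendsto_det[OF P])
  have ev2: "eventually (\<lambda>x. det (P x) \<noteq> 0) F"
    using tendsto_imp_eventually_ne[OF dP det0] .
  have key: "invertible (G x) \<and> matrix_inv (G x) =
      (\<chi> i j. if i = j then inverse (d x j) else 0) ** matrix_inv (P x)"
    if h: "G x = P x ** (\<chi> i j. if i = j then d x j else 0) \<and> (\<forall>j. d x j \<noteq> 0)" "det (P x) \<noteq> 0" for x
  proof -
    have iP: "invertible (P x)" using h(2) invertible_det_nz by blast
    have "G x ** ((\<chi> i j. if i = j then inverse (d x j) else 0) ** matrix_inv (P x))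
        = P x ** (((\<chi> i j. if i = j then d x j else 0) ** (\<chi> i j. if i = j then inverse (d x j) else 0)) ** matrix_inv (P x))"
      using h(1) by (simp add: matrix_mul_assoc)
    also have "\<dots> = mat 1" using h(1) by (simp add: diag_mult_inv matrix_mul_lid matrix_inv_works[OF iP])
    finally have *: "G x ** ((\<chi> i j. if i = j then inverse (d x j) else 0) ** matrix_inv (P x)) = mat 1" .
    show ?thesis using matrix_inv_unique[OF *] * invertible_right_inverse by blast
  qed
  have ev3: "eventually (\<lambda>x. invertible (G x) \<and> matrix_inv (G x) =
      (\<chi> i j. if i = j then inverse (d x j) else 0) ** matrix_inv (P x)) F"
    using eventually_conj[OF ev ev2] by (rule eventually_mono) (use key in blast)
  have lim: "((\<lambda>x. (\<chi> i j. if i = j then inverse (d x j) else 0) ** matrix_inv (P x)) \<longlongrightarrow>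
     (\<chi> i j. if i = j then e j else 0) ** matrix_inv P0) F"
  proof (rule tendsto_matrix_mult[OF _ tendsto_matrix_inv[OF P det0]])
    show "((\<lambda>x. \<chi> i j. if i = j then inverse (d x j) else 0) \<longlongrightarrow> (\<chi> i j. if i = j then e j else 0)) F"
    proof (rule tendsto_vec_lambda, rule tendsto_vec_lambda)
      fix i j show "((\<lambda>x. if i = j then inverse (d x j) else 0) \<longlongrightarrow> (if i = j then e j else 0)) F"
        by (cases "i = j") (auto intro: dl)
    qed
  qed
  show ?thesis
  proof
    show "eventually (\<lambda>x. invertible (G x)) F" using ev3 by (rule eventually_mono) blast
    show "\<exists>L. ((\<lambda>x. matrix_inv (G x)) \<longlongrightarrow> L) F"
      by (rule exI, rule tendsto_cong[THEN iffD1, rotated, OF lim])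
         (rule eventually_mono[OF ev3], simp)
  qed
qed



lemma core_det:
  fixes s c :: "'n::finite \<Rightarrow> real" and \<kappa> \<phi> \<tau> :: real
  assumes k: "\<kappa> \<noteq> 0" and tau: "\<tau> \<noteq> 0"
  shows "det (\<chi> i j. of_real \<kappa> * cis (\<phi> * \<bar>s i - s j\<bar>) * of_real (c j)
                 - (if i = j then \<i> * of_real \<tau> else 0) :: complex^'n^'n) \<noteq> 0"
    (is "det ?P \<noteq> 0")
proof
  assume "det ?P = 0"
  then have "\<not> invertible ?P" using invertible_det_nz by blast
  then have "\<not> (\<exists>B. B ** ?P = mat 1)" using invertible_left_inverse by blast
  then obtain y where y: "?P *v y = 0" "y \<noteq> 0"
    using matrix_left_invertible_ker by blast
  have eq: "(\<Sum>j\<in>UNIV. cis (\<phi> * \<bar>s i - s j\<bar>) * (of_real (c j) * y $ j)) = \<i> * of_real (\<tau> / \<kappa>) * y $ i" for i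
  proof -
    have "(?P *v y) $ i = 0" using y(1) by simp
    then have "(\<Sum>j\<in>UNIV. (of_real \<kappa> * cis (\<phi> * \<bar>s i - s j\<bar>) * of_real (c j)
                 - (if i = j then \<i> * of_real \<tau> else 0)) * y $ j) = 0"
      by (simp add: matrix_vector_mult_def)
    then have "(\<Sum>j\<in>UNIV. of_real \<kappa> * (cis (\<phi> * \<bar>s i - s j\<bar>) * (of_real (c j) * y $ j)))
         - \<i> * of_real \<tau> * y $ i = 0"
    proof -
      have d: "(\<Sum>j\<in>UNIV. (if i = j then \<i> * of_real \<tau> else 0) * y $ j) = \<i> * of_real \<tau> * y $ i"
      proof -
        have "(\<Sum>j\<in>UNIV. (if i = j then \<i> * of_real \<tau> else 0) * y $ j)
            = (\<Sum>j\<in>UNIV. if i = j then \<i> * of_real \<tau> * y $ j else 0)"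
          by (rule sum.cong) auto
        also have "\<dots> = \<i> * of_real \<tau> * y $ i" by (simp add: sum.delta)
        finally show ?thesis .
      qed
      assume h: "(\<Sum>j\<in>UNIV. (of_real \<kappa> * cis (\<phi> * \<bar>s i - s j\<bar>) * of_real (c j)
                 - (if i = j then \<i> * of_real \<tau> else 0)) * y $ j) = 0"
      have "(\<Sum>j\<in>UNIV. (of_real \<kappa> * cis (\<phi> * \<bar>s i - s j\<bar>) * of_real (c j)
                 - (if i = j then \<i> * of_real \<tau> else 0)) * y $ j)
          = (\<Sum>j\<in>UNIV. of_real \<kappa> * (cis (\<phi> * \<bar>s i - s j\<bar>) * (of_real (c j) * y $ j)))
            - (\<Sum>j\<in>UNIV. (if i = j then \<i> * of_real \<tau> else 0) * y $ j)"
        by (simp only: left_diff_distrib sum_subtractf mult.assoc)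
      then show ?thesis using h d by simp
    qed
    then have "of_real \<kappa> * (\<Sum>j\<in>UNIV. cis (\<phi> * \<bar>s i - s j\<bar>) * (of_real (c j) * y $ j))
         = \<i> * of_real \<tau> * y $ i"
      by (simp add: sum_distrib_left)
    then show ?thesis using k by (simp add: field_simps)
  qed
  have "y $ i = 0" for i
    by (rule core[where y="\<lambda>j. y $ j", OF _ eq]) (use k tau in simp)
  then have "y = 0" by (simp add: vec_eq_iff)
  then show False using y(2) by simp
qed



lemma alg:
  fixes z sg X A R Sc D :: complex and b :: bool
  assumes "D \<noteq> 0" "z \<noteq> 0" "A \<noteq> 0" "R \<noteq> 0" "Sc \<noteq> 0"
  shows "- z * (sg * X / (2 * A * R * z) + (if b then Sc else 0) / D)
     = (- sg * X * D / (2 * A * R * Sc) - (if b then 1 else 0) * z) * (Sc / D)"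
  using assms by (cases b) (simp_all add: field_simps)

lemma side:
  fixes s K M :: "'n::finite \<Rightarrow> real" and a rho0 S t \<sigma> :: real
  assumes sg: "\<sigma> = 1 \<or> \<sigma> = -1"
    and a: "a > 0" and r: "rho0 > 0" and S: "S > 0"
    and K: "\<And>j. K j > 0" and M: "\<And>j. M j > 0"
    and t: "t \<noteq> 0"
  shows "(\<forall>\<^sub>F \<epsilon> in at_right (0::real).
              invertible (Gamma_mat a rho0 S K M s (\<i> * of_real t + of_real (\<sigma> * \<epsilon>)))) \<and>
         (\<exists>L. ((\<lambda>\<epsilon>. matrix_inv (Gamma_mat a rho0 S K M s (\<i> * of_real t + of_real (\<sigma> * \<epsilon>))))
              \<longlongrightarrow> L) (at_right 0))"
proof -
  define z where "z \<epsilon> = \<i> * of_real t + of_real (\<sigma> * \<epsilon>)" for \<epsilon> :: real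
  define Pz where "Pz w = ((\<chi> i j. - of_real \<sigma> * exp (- of_real \<sigma> * w * of_real \<bar>s i - s j\<bar> / of_real a)
        * (of_real (K j) + w^2 * of_real (M j)) / (2 * of_real a * of_real rho0 * of_real S)
        - (if i = j then 1 else 0) * w) :: complex^'n^'n)" for w
  define d where "d \<epsilon> j = of_real S / (of_real (K j) + z \<epsilon> ^2 * of_real (M j))" for \<epsilon> j
  have zt: "(z \<longlongrightarrow> z 0) (at_right 0)" unfolding z_def by (intro tendsto_intros)
  have Pt: "((\<lambda>\<epsilon>. Pz (z \<epsilon>)) \<longlongrightarrow> Pz (z 0)) (at_right 0)"
    unfolding Pz_def using a r S by (intro tendsto_intros zt) auto
  have z0: "z 0 = \<i> * of_real t" by (simp add: z_def)
  have P0: "Pz (z 0) = (\<chi> i j. of_real (- \<sigma> / (2 * a * rho0 * S)) * cis ((- \<sigma> * t / a) * \<bar>s i - s j\<bar>)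
       * of_real (K j - t^2 * M j) - (if i = j then \<i> * of_real t else 0))"
    unfolding Pz_def z0 vec_eq_iff
  proof (intro allI)
    fix i j
    have e: "exp (- of_real \<sigma> * (\<i> * of_real t) * of_real \<bar>s i - s j\<bar> / of_real a)
         = cis ((- \<sigma> * t / a) * \<bar>s i - s j\<bar>)"
      unfolding cis_conv_exp by (rule arg_cong[where f=exp]) (simp add: field_simps)
    have sq: "(\<i> * complex_of_real t)^2 = - of_real (t^2)" by (simp add: power_mult_distrib)
    have nz: "complex_of_real a \<noteq> 0" "complex_of_real rho0 \<noteq> 0" "complex_of_real S \<noteq> 0"
      using a r S by auto
    show "(\<chi> i j. - of_real \<sigma> * exp (- of_real \<sigma> * (\<i> * of_real t) * of_real \<bar>s i - s j\<bar> / of_real a)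
        * (of_real (K j) + (\<i> * of_real t)^2 * of_real (M j)) / (2 * of_real a * of_real rho0 * of_real S)
        - (if i = j then 1 else 0) * (\<i> * of_real t)) $ i $ j =
        (\<chi> i j. of_real (- \<sigma> / (2 * a * rho0 * S)) * cis ((- \<sigma> * t / a) * \<bar>s i - s j\<bar>)
       * of_real (K j - t^2 * M j) - (if i = j then \<i> * of_real t else 0)) $ i $ j"
      unfolding vec_lambda_beta e sq using nz by (simp add: field_simps)
  qed
  have det0: "det (Pz (z 0)) \<noteq> 0"
    unfolding P0 by (rule core_det) (use sg a r S t in auto)
  have ev: "\<forall>\<^sub>F \<epsilon> in at_right 0. Gamma_mat a rho0 S K M s (z \<epsilon>) = Pz (z \<epsilon>) ** (\<chi> i j. if i = j then d \<epsilon> j else 0)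
       \<and> (\<forall>j. d \<epsilon> j \<noteq> 0)"
  proof (rule eventually_mono[OF eventually_at_right_less])
    fix \<epsilon> :: real assume e: "0 < \<epsilon>"
    have Re: "Re (z \<epsilon>) = \<sigma> * \<epsilon>" by (simp add: z_def)
    have Re0: "Re (z \<epsilon>) \<noteq> 0" using Re e sg by auto
    have zn: "z \<epsilon> \<noteq> 0" using Re0 by auto
    have sgn: "(if Re (z \<epsilon>) > 0 then (1::complex) else -1) = of_real \<sigma>" using Re e sg by auto
    have Kn: "of_real (K j) + z \<epsilon> ^2 * of_real (M j) \<noteq> 0" for j
    proof
      assume h: "of_real (K j) + z \<epsilon> ^2 * of_real (M j) = 0"
      have "Im (of_real (K j) + z \<epsilon> ^2 * of_real (M j)) = 2 * t * (\<sigma> * \<epsilon>) * M j"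
        by (simp add: z_def power2_eq_square)
      then have "2 * t * (\<sigma> * \<epsilon>) * M j = 0" using h by simp
      then show False using t e sg M[of j] by auto
    qed
    have dn: "d \<epsilon> j \<noteq> 0" for j using Kn[of j] S by (simp add: d_def)
    have nz: "complex_of_real a \<noteq> 0" "complex_of_real rho0 \<noteq> 0" "complex_of_real S \<noteq> 0"
      using a r S by auto
    have diag: "(A ** (\<chi> i j. if i = j then d \<epsilon> j else 0)) $ i $ j = A $ i $ j * d \<epsilon> j" for A :: "complex^'n^'n" and i j
    proof -
      have "(A ** (\<chi> i j. if i = j then d \<epsilon> j else 0)) $ i $ j = (\<Sum>k\<in>UNIV. if k = j then A $ i $ k * d \<epsilon> j else 0)"
        unfolding matrix_matrix_mult_def vec_lambda_beta by (rule sum.cong) auto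
      then show ?thesis by simp
    qed
    have "Gamma_mat a rho0 S K M s (z \<epsilon>) = Pz (z \<epsilon>) ** (\<chi> i j. if i = j then d \<epsilon> j else 0)"
      unfolding vec_eq_iff diag
    proof (intro allI)
      fix i j
      show "Gamma_mat a rho0 S K M s (z \<epsilon>) $ i $ j = Pz (z \<epsilon>) $ i $ j * d \<epsilon> j"
        unfolding Gamma_mat_def Pz_def d_def Let_def sgn vec_lambda_beta if_not_P[OF Re0]
        by (rule alg) (use zn Kn[of j] nz in auto)
    qed
    then show "Gamma_mat a rho0 S K M s (z \<epsilon>) = Pz (z \<epsilon>) ** (\<chi> i j. if i = j then d \<epsilon> j else 0)
       \<and> (\<forall>j. d \<epsilon> j \<noteq> 0)" using dn by blast
  qed
  have dl: "((\<lambda>\<epsilon>. inverse (d \<epsilon> j)) \<longlongrightarrow> (of_real (K j) + z 0 ^2 * of_real (M j)) / of_real S) (at_right 0)" for j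
    unfolding d_def inverse_divide using S by (intro tendsto_intros zt) auto
  have "(\<forall>\<^sub>F \<epsilon> in at_right (0::real). invertible (Gamma_mat a rho0 S K M s (z \<epsilon>))) \<and>
         (\<exists>L. ((\<lambda>\<epsilon>. matrix_inv (Gamma_mat a rho0 S K M s (z \<epsilon>))) \<longlongrightarrow> L) (at_right 0))"
    by (rule inv_limit[OF Pt det0 ev dl])
  then show ?thesis unfolding z_def .
qed

theorem mainTheorem2:
  fixes s K M :: "'n::finite \<Rightarrow> real" and a rho0 S t :: real
  assumes "inj s"
    and "a > 0" and "rho0 > 0" and "S > 0"
    and "\<And>j. K j > 0" and "\<And>j. M j > 0"
    and "t \<noteq> 0"
  shows "\<exists>Lp Lm :: complex^'n^'n.
           (\<forall>\<^sub>F \<epsilon> in at_right (0::real).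
              invertible (Gamma_mat a rho0 S K M s (\<i> * of_real t + of_real \<epsilon>))) \<and>
           ((\<lambda>\<epsilon>. matrix_inv (Gamma_mat a rho0 S K M s (\<i> * of_real t + of_real \<epsilon>)))
              \<longlongrightarrow> Lp) (at_right 0) \<and>
           (\<forall>\<^sub>F \<epsilon> in at_right (0::real).
              invertible (Gamma_mat a rho0 S K M s (\<i> * of_real t - of_real \<epsilon>))) \<and>
           ((\<lambda>\<epsilon>. matrix_inv (Gamma_mat a rho0 S K M s (\<i> * of_real t - of_real \<epsilon>)))
              \<longlongrightarrow> Lm) (at_right 0)"
  proof -
  have p: "(\<forall>\<^sub>F \<epsilon> in at_right (0::real).
              invertible (Gamma_mat a rho0 S K M s (\<i> * of_real t + of_real (1 * \<epsilon>)))) \<and>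
         (\<exists>L. ((\<lambda>\<epsilon>. matrix_inv (Gamma_mat a rho0 S K M s (\<i> * of_real t + of_real (1 * \<epsilon>))))
              \<longlongrightarrow> L) (at_right 0))"
    by (rule side) (use assms in auto)
  have m: "(\<forall>\<^sub>F \<epsilon> in at_right (0::real).
              invertible (Gamma_mat a rho0 S K M s (\<i> * of_real t + of_real ((-1) * \<epsilon>)))) \<and>
         (\<exists>L. ((\<lambda>\<epsilon>. matrix_inv (Gamma_mat a rho0 S K M s (\<i> * of_real t + of_real ((-1) * \<epsilon>))))
              \<longlongrightarrow> L) (at_right 0))"
    by (rule side) (use assms in auto)
  have e1: "\<And>\<epsilon>::real. \<i> * complex_of_real t + complex_of_real (1 * \<epsilon>) = \<i> * of_real t + of_real \<epsilon>" by simp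
  have e2: "\<And>\<epsilon>::real. \<i> * complex_of_real t + complex_of_real ((-1) * \<epsilon>) = \<i> * of_real t - of_real \<epsilon>" by simp
  show ?thesis using p m unfolding e1 e2 by blast
qed

end
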